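(* Let $G$ be a graph and let $S$ be the set of vertices covered by a maximal (under inclusion) collection of pairwise edge-disjoint induced paws in $G$. Then every vertex $s\in S$ is adjacent to at most one connected component of $G-S$ that is a complete multipartite graph.
   Context: The paw is the graph on four vertices $x_1,x_2,x_3,x_4$ with edges $x_1x_2,x_2x_3,x_1x_3,x_3x_4$. A complete multipartite graph here means one whose vertex set is partitioned into at least three nonempty independent sets (parts) with all edges between different parts present (in particular it contains a triangle). *)

theory Defs
  imports Main
begin

definition simple_graph :: "'a set \<Rightarrow> ('a \<Rightarrow> 'a \<Rightarrow> bool) \<Rightarrow> bool" where
  "simple_graph V E \<longleftrightarrow> finite V \<and> (\<forall>x y. E x y \<longrightarrow> x \<in> V \<and> y \<in> V)
     \<and> (\<forall>x y. E x y \<longrightarrow> E y x) \<and> (\<forall>x. \<not> E x x)"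

definition induced_paw :: "'a set \<Rightarrow> ('a \<Rightarrow> 'a \<Rightarrow> bool) \<Rightarrow> 'a set set \<Rightarrow> bool" where
  "induced_paw V E P \<longleftrightarrow> (\<exists>x1 x2 x3 x4. distinct [x1, x2, x3, x4]
     \<and> x1 \<in> V \<and> x2 \<in> V \<and> x3 \<in> V \<and> x4 \<in> V
     \<and> E x1 x2 \<and> E x2 x3 \<and> E x1 x3 \<and> E x3 x4 \<and> \<not> E x1 x4 \<and> \<not> E x2 x4
     \<and> P = {{x1, x2}, {x2, x3}, {x1, x3}, {x3, x4}})"

definition edge_disjoint_paws :: "'a set \<Rightarrow> ('a \<Rightarrow> 'a \<Rightarrow> bool) \<Rightarrow> 'a set set set \<Rightarrow> bool" where
  "edge_disjoint_paws V E C \<longleftrightarrow> (\<forall>P\<in>C. induced_paw V E P)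
     \<and> (\<forall>P\<in>C. \<forall>Q\<in>C. P \<noteq> Q \<longrightarrow> P \<inter> Q = {})"

definition maximal_edge_disjoint_paws :: "'a set \<Rightarrow> ('a \<Rightarrow> 'a \<Rightarrow> bool) \<Rightarrow> 'a set set set \<Rightarrow> bool" where
  "maximal_edge_disjoint_paws V E C \<longleftrightarrow> edge_disjoint_paws V E C
     \<and> (\<forall>C'. C \<subseteq> C' \<and> edge_disjoint_paws V E C' \<longrightarrow> C' = C)"

definition covered :: "'a set set set \<Rightarrow> 'a set" where
  "covered C = \<Union>(\<Union>C)"

definition component :: "'a set \<Rightarrow> ('a \<Rightarrow> 'a \<Rightarrow> bool) \<Rightarrow> 'a set \<Rightarrow> bool" where
  "component W E K \<longleftrightarrow> (\<exists>v\<in>W. K = {u. (\<lambda>a b. a \<in> W \<and> b \<in> W \<and> E a b)\<^sup>*\<^sup>* v u})"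

definition complete_multipartite :: "'a set \<Rightarrow> ('a \<Rightarrow> 'a \<Rightarrow> bool) \<Rightarrow> bool" where
  "complete_multipartite K E \<longleftrightarrow> (\<exists>Ps. \<Union>Ps = K \<and> (\<forall>X\<in>Ps. X \<noteq> {})
     \<and> (\<forall>X\<in>Ps. \<forall>Y\<in>Ps. X \<noteq> Y \<longrightarrow> X \<inter> Y = {})
     \<and> (\<forall>X\<in>Ps. \<forall>x\<in>X. \<forall>y\<in>X. \<not> E x y)
     \<and> (\<forall>X\<in>Ps. \<forall>Y\<in>Ps. X \<noteq> Y \<longrightarrow> (\<forall>x\<in>X. \<forall>y\<in>Y. E x y))
     \<and> (\<exists>X\<in>Ps. \<exists>Y\<in>Ps. \<exists>Z\<in>Ps. X \<noteq> Y \<and> X \<noteq> Z \<and> Y \<noteq> Z))"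

end

theory Submission
  imports Defs
begin

lemma no_new_paw:
  assumes max: "maximal_edge_disjoint_paws V E C"
    and d: "distinct [x1, x2, x3, x4]"
    and v: "x1 \<in> V" "x2 \<in> V" "x3 \<in> V" "x4 \<in> V"
    and e: "E x1 x2" "E x2 x3" "E x1 x3" "E x3 x4" "\<not> E x1 x4" "\<not> E x2 x4"
    and unc: "x1 \<notin> covered C \<or> x2 \<notin> covered C" "x2 \<notin> covered C \<or> x3 \<notin> covered C"
      "x1 \<notin> covered C \<or> x3 \<notin> covered C" "x3 \<notin> covered C \<or> x4 \<notin> covered C"
  shows False
proof -
  define P where "P = {{x1, x2}, {x2, x3}, {x1, x3}, {x3, x4}}"
  have paw: "induced_paw V E P" unfolding induced_paw_def
    apply (rule exI[of _ x1], rule exI[of _ x2], rule exI[of _ x3], rule exI[of _ x4])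
    using d v e P_def by simp
  have sub: "\<And>Q e. Q \<in> C \<Longrightarrow> e \<in> Q \<Longrightarrow> e \<subseteq> covered C"
    unfolding covered_def by blast
  have nP: "\<And>e. e \<in> P \<Longrightarrow> \<not> e \<subseteq> covered C"
  proof -
    fix e assume "e \<in> P"
    then have "e = {x1, x2} \<or> e = {x2, x3} \<or> e = {x1, x3} \<or> e = {x3, x4}"
      unfolding P_def by simp
    then show "\<not> e \<subseteq> covered C" using unc by (elim disjE) simp_all
  qed
  have disj: "\<And>Q. Q \<in> C \<Longrightarrow> P \<inter> Q = {}"
  proof (rule ccontr)
    fix Q assume "Q \<in> C" "P \<inter> Q \<noteq> {}"
    then obtain e where "e \<in> P" "e \<in> Q" by blast
    with sub[OF \<open>Q \<in> C\<close>] nP show False by blast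
  qed
  have ed: "edge_disjoint_paws V E C" using max unfolding maximal_edge_disjoint_paws_def by blast
  have "edge_disjoint_paws V E (insert P C)"
    unfolding edge_disjoint_paws_def
  proof (intro conjI ballI impI)
    fix R assume "R \<in> insert P C"
    then show "induced_paw V E R" using ed paw unfolding edge_disjoint_paws_def by blast
  next
    fix R Q assume a: "R \<in> insert P C" "Q \<in> insert P C" "R \<noteq> Q"
    show "R \<inter> Q = {}"
    proof (cases "R = P")
      case True
      then have "Q \<in> C" using a by simp
      then show ?thesis using disj True by simp
    next
      case False
      then have R: "R \<in> C" using a by simp
      show ?thesis
      proof (cases "Q = P")
        case True then show ?thesis using disj[OF R] by (simp add: inf_commute)
      next
        case False
        then have "Q \<in> C" using a by simp
        then show ?thesis using ed R a(3) unfolding edge_disjoint_paws_def by blast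
      qed
    qed
  qed
  then have "insert P C = C" using max unfolding maximal_edge_disjoint_paws_def
    by (metis subset_insertI)
  then have "P \<in> C" by blast
  moreover have "{x1,x2} \<in> P" unfolding P_def by simp
  ultimately show False using sub nP by blast
qed

lemma rt_sym:
  assumes "\<And>a b. R a b \<Longrightarrow> R b a" and "R\<^sup>*\<^sup>* x y"
  shows "R\<^sup>*\<^sup>* y x"
  using assms(2)
proof (induction rule: rtranclp_induct)
  case base then show ?case by simp
next
  case (step y z)
  then show ?case using assms(1) by (meson converse_rtranclp_into_rtranclp)
qed

lemma rt_in:
  assumes "R\<^sup>*\<^sup>* x y" and "x \<in> W" and "\<And>a b. R a b \<Longrightarrow> b \<in> W"
  shows "y \<in> W"
  using assms by (induction rule: rtranclp_induct) auto

lemma comp_facts: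
  assumes sg: "simple_graph V E" and K: "component W E K"
  shows "K \<subseteq> W"
    and "\<And>x y. x \<in> K \<Longrightarrow> y \<in> W \<Longrightarrow> E x y \<Longrightarrow> y \<in> K"
    and "\<And>x K'. component W E K' \<Longrightarrow> x \<in> K \<Longrightarrow> x \<in> K' \<Longrightarrow> K = K'"
proof -
  define R where "R = (\<lambda>a b. a \<in> W \<and> b \<in> W \<and> E a b)"
  have Rs: "\<And>a b. R a b \<Longrightarrow> R b a" using sg unfolding R_def simple_graph_def by blast
  have Rt: "\<And>x y z. R\<^sup>*\<^sup>* x y \<Longrightarrow> R\<^sup>*\<^sup>* y z \<Longrightarrow> R\<^sup>*\<^sup>* x z" by auto
  obtain v where v: "v \<in> W" "K = {u. R\<^sup>*\<^sup>* v u}" using K unfolding component_def R_def by blast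
  show "K \<subseteq> W"
  proof
    fix y assume "y \<in> K"
    then have "R\<^sup>*\<^sup>* v y" using v by simp
    then show "y \<in> W" using rt_in[of R v y W] v R_def by blast
  qed
  show "\<And>x y. x \<in> K \<Longrightarrow> y \<in> W \<Longrightarrow> E x y \<Longrightarrow> y \<in> K"
  proof -
    fix x y assume a: "x \<in> K" "y \<in> W" "E x y"
    have "x \<in> W" using a(1) \<open>K \<subseteq> W\<close> by blast
    then have "R x y" using a R_def by simp
    then show "y \<in> K" using a(1) v by auto
  qed
  show "\<And>x K'. component W E K' \<Longrightarrow> x \<in> K \<Longrightarrow> x \<in> K' \<Longrightarrow> K = K'"
  proof -
    fix x K' assume a: "component W E K'" "x \<in> K" "x \<in> K'"
    obtain v' where v': "v' \<in> W" "K' = {u. R\<^sup>*\<^sup>* v' u}" using a(1) unfolding component_def R_def by blast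
    have 1: "R\<^sup>*\<^sup>* v x" "R\<^sup>*\<^sup>* v' x" using a v v' by auto
    have "R\<^sup>*\<^sup>* v v'" using Rt[OF 1(1) rt_sym[OF Rs 1(2)]] .
    moreover have "R\<^sup>*\<^sup>* v' v" using rt_sym[OF Rs calculation] .
    ultimately show "K = K'" using v(2) v'(2) Rt[of v v'] Rt[of v' v] by blast
  qed
qed

theorem lemma4:
  fixes V :: "'a set" and E :: "'a \<Rightarrow> 'a \<Rightarrow> bool" and C :: "'a set set set"
  assumes "simple_graph V E"
    and "maximal_edge_disjoint_paws V E C"
    and "s \<in> covered C"
    and "component (V - covered C) E K1" and "complete_multipartite K1 E" and "\<exists>u\<in>K1. E s u"
    and "component (V - covered C) E K2" and "complete_multipartite K2 E" and "\<exists>u\<in>K2. E s u"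
  shows "K1 = K2"
proof (rule ccontr)
  assume ne: "K1 \<noteq> K2"
  note sg = assms(1) and max = assms(2)
  let ?W = "V - covered C"
  note c1 = comp_facts[OF sg assms(4)] and c2 = comp_facts[OF sg assms(7)]
  obtain u1 where u1: "u1 \<in> K1" "E s u1" using assms(6) by blast
  obtain u2 where u2: "u2 \<in> K2" "E s u2" using assms(9) by blast
  have sV: "s \<in> V" using sg u1 unfolding simple_graph_def by blast
  have sym: "\<And>a b. E a b \<Longrightarrow> E b a" and irr: "\<And>a. \<not> E a a"
    using sg unfolding simple_graph_def by blast+
  obtain Ps where Ps: "\<Union>Ps = K1" "\<forall>X\<in>Ps. X \<noteq> {}"
     "\<forall>X\<in>Ps. \<forall>Y\<in>Ps. X \<noteq> Y \<longrightarrow> X \<inter> Y = {}"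
     "\<forall>X\<in>Ps. \<forall>x\<in>X. \<forall>y\<in>X. \<not> E x y"
     "\<forall>X\<in>Ps. \<forall>Y\<in>Ps. X \<noteq> Y \<longrightarrow> (\<forall>x\<in>X. \<forall>y\<in>Y. E x y)"
     "\<exists>X\<in>Ps. \<exists>Y\<in>Ps. \<exists>Z\<in>Ps. X \<noteq> Y \<and> X \<noteq> Z \<and> Y \<noteq> Z"
  proof -
    from assms(5) obtain Ps where Pc: "\<Union>Ps = K1 \<and> (\<forall>X\<in>Ps. X \<noteq> {})
     \<and> (\<forall>X\<in>Ps. \<forall>Y\<in>Ps. X \<noteq> Y \<longrightarrow> X \<inter> Y = {})
     \<and> (\<forall>X\<in>Ps. \<forall>x\<in>X. \<forall>y\<in>X. \<not> E x y)
     \<and> (\<forall>X\<in>Ps. \<forall>Y\<in>Ps. X \<noteq> Y \<longrightarrow> (\<forall>x\<in>X. \<forall>y\<in>Y. E x y))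
     \<and> (\<exists>X\<in>Ps. \<exists>Y\<in>Ps. \<exists>Z\<in>Ps. X \<noteq> Y \<and> X \<noteq> Z \<and> Y \<noteq> Z)"
      unfolding complete_multipartite_def by (rule exE)
    then show ?thesis by (elim conjE) (rule that)
  qed
  have U: "\<And>A a. A \<in> Ps \<Longrightarrow> a \<in> A \<Longrightarrow> a \<in> K1"
  proof -
    fix A a assume "A \<in> Ps" "a \<in> A"
    then have "a \<in> \<Union>Ps" by (rule UnionI)
    then show "a \<in> K1" by (simp only: Ps(1))
  qed
  have "u1 \<in> \<Union>Ps" using u1(1) by (simp only: Ps(1))
  then obtain X where X: "X \<in> Ps" "u1 \<in> X" by (rule UnionE)
  obtain A B D where ABD: "A \<in> Ps" "B \<in> Ps" "D \<in> Ps" "A \<noteq> B" "A \<noteq> D" "B \<noteq> D"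
    using Ps(6) by blast
  have "\<exists>Y Z. Y \<in> Ps \<and> Z \<in> Ps \<and> Y \<noteq> X \<and> Z \<noteq> X \<and> Y \<noteq> Z"
  proof (cases "X = A")
    case True then show ?thesis using ABD by (intro exI[of _ B] exI[of _ D]) simp
  next
    case nA: False
    show ?thesis
    proof (cases "X = B")
      case True then show ?thesis using ABD by (intro exI[of _ A] exI[of _ D]) simp
    next
      case False then show ?thesis using ABD nA by (intro exI[of _ A] exI[of _ B]) simp
    qed
  qed
  then obtain Y Z where YZ: "Y \<in> Ps" "Z \<in> Ps" "Y \<noteq> X" "Z \<noteq> X" "Y \<noteq> Z"
    by blast
  obtain v1 where v1: "v1 \<in> Y" using Ps(2) YZ(1) by blast
  obtain w1 where w1: "w1 \<in> Z" using Ps(2) YZ(2) by blast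
  have inK1: "v1 \<in> K1" "w1 \<in> K1" using U YZ(1,2) v1 w1 by blast+
  have K1W: "u1 \<in> ?W" "v1 \<in> ?W" "w1 \<in> ?W"
    using c1(1) u1(1) inK1 by (auto simp only: subset_iff)
  have u2W: "u2 \<in> ?W" using c2(1) u2(1) by (auto simp only: subset_iff)
  have E1a: "E u1 v1" using Ps(5) X(1) YZ(1) YZ(3) X(2) v1 by blast
  have E1b: "E u1 w1" using Ps(5) X(1) YZ(2) YZ(4) X(2) w1 by blast
  have E1c: "E v1 w1" using Ps(5) YZ(1) YZ(2) YZ(5) v1 w1 by blast
  note E1 = E1a E1b E1c
  have d1: "u1 \<noteq> v1" "u1 \<noteq> w1" "v1 \<noteq> w1" using E1 irr by metis+
  have nK2: "\<And>x. x \<in> K1 \<Longrightarrow> x \<noteq> u2 \<and> \<not> E x u2"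
  proof -
    fix x assume x: "x \<in> K1"
    have "x \<noteq> u2" using c1(3)[OF assms(7) x] u2 ne by blast
    moreover have "\<not> E x u2" using c1(2)[OF x u2W] c1(3)[OF assms(7) _ u2(1)] ne by blast
    ultimately show "x \<noteq> u2 \<and> \<not> E x u2" by blast
  qed
  have sW: "s \<notin> ?W" using assms(3) by blast
  have ds: "s \<noteq> u1" "s \<noteq> v1" "s \<noteq> w1" "s \<noteq> u2" using sW K1W u2W by blast+
  have VV: "u1 \<in> V" "v1 \<in> V" "w1 \<in> V" "u2 \<in> V" using K1W u2W by blast+
  have nc: "u1 \<notin> covered C" "v1 \<notin> covered C" "w1 \<notin> covered C" "u2 \<notin> covered C"
    using K1W u2W by blast+
  show False
  proof (cases "E s v1")
    case True
    show False
      apply (rule no_new_paw[OF max, of u1 v1 s u2])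
      using d1 ds VV sV E1(1) sym[OF True] sym[OF u1(2)] u2(2) nK2[OF u1(1)] nK2[OF inK1(1)] nc
      by simp_all
  next
    case nv: False
    show False
    proof (cases "E s w1")
      case True
      show False
        apply (rule no_new_paw[OF max, of u1 w1 s u2])
        using d1 ds VV sV E1(2) sym[OF True] sym[OF u1(2)] u2(2) nK2[OF u1(1)] nK2[OF inK1(2)] nc
        by simp_all
    next
      case False
      have nv': "\<not> E v1 s" using nv sym[of v1 s] by blast
      have nw': "\<not> E w1 s" using False sym[of w1 s] by blast
      show False
        apply (rule no_new_paw[OF max, of v1 w1 u1 s])
        using d1 ds VV sV E1(3) sym[OF E1(1)] sym[OF E1(2)] sym[OF u1(2)] nc
          nv' nw'
        by simp_all
    qed
  qed
qed

end
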